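(* Let $X$ be a nonempty finite set. For all $\kappa,\lambda,\mu,\nu\in\mathcal{D}(X)$ and every $\omega\in\Omega(\lambda,\mu)$, there exist $\pi\in\Omega(\kappa,\mu)$ and $\rho\in\Omega(\lambda,\nu)$ such that $d_{TV}(\omega,\pi)\le d_{TV}(\kappa,\lambda)$ and $d_{TV}(\omega,\rho)\le d_{TV}(\mu,\nu)$.
   Context: $\mathcal{D}(Y)$ is the set of probability distributions on a finite set $Y$. $\Omega(\mu,\nu)=\{\omega\in\mathcal{D}(X\times X)\mid\forall x:\sum_y\omega(x,y)=\mu(x),\ \sum_y\omega(y,x)=\nu(x)\}$. For distributions $\alpha,\beta$ on a finite set $Y$ (here $Y=X$ or $Y=X\times X$), $d_{TV}(\alpha,\beta)=\max_{y\in Y}|\alpha(y)-\beta(y)|$ (a maximum pointwise difference, not the usual total variation). *)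

theory Defs
  imports Complex_Main
begin

text \<open>Probability distributions on a finite set, represented on a finite type 'a
  (nonempty automatically) as real-valued functions that are nonnegative and sum to 1.\<close>
definition distr :: "('a::finite \<Rightarrow> real) \<Rightarrow> bool" where
  "distr p \<longleftrightarrow> (\<forall>y. 0 \<le> p y) \<and> (\<Sum>y\<in>UNIV. p y) = 1"

definition couplings :: "('a::finite \<Rightarrow> real) \<Rightarrow> ('a \<Rightarrow> real) \<Rightarrow> ('a \<times> 'a \<Rightarrow> real) set" where
  "couplings mu nu = {\<omega>. distr \<omega> \<and>
      (\<forall>x. (\<Sum>y\<in>UNIV. \<omega> (x, y)) = mu x) \<and>
      (\<forall>x. (\<Sum>y\<in>UNIV. \<omega> (y, x)) = nu x)}"

text \<open>d_TV as the maximum pointwise difference (as in the paper).\<close>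
definition dTV :: "('a::finite \<Rightarrow> real) \<Rightarrow> ('a \<Rightarrow> real) \<Rightarrow> real" where
  "dTV \<alpha> \<beta> = Max (range (\<lambda>y. \<bar>\<alpha> y - \<beta> y\<bar>))"

end

theory Submission
  imports Defs
begin

lemma one_side:
  fixes ka la mu :: "'a::finite \<Rightarrow> real" and om :: "'a \<times> 'a \<Rightarrow> real"
  assumes ka: "distr ka" and la: "distr la" and om: "om \<in> couplings la mu"
  shows "\<exists>p \<in> couplings ka mu. \<forall>x y. \<bar>om (x,y) - p (x,y)\<bar> \<le> \<bar>ka x - la x\<bar>"
proof -
  have omnn: "\<And>z. 0 \<le> om z" and row: "\<And>x. (\<Sum>y\<in>UNIV. om (x, y)) = la x"
    and col: "\<And>x. (\<Sum>y\<in>UNIV. om (y, x)) = mu x"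
    using om by (auto simp: couplings_def distr_def)
  have kann: "\<And>x. 0 \<le> ka x" and kas: "(\<Sum>y\<in>UNIV. ka y) = 1" using ka by (auto simp: distr_def)
  have lann: "\<And>x. 0 \<le> la x" and las: "(\<Sum>y\<in>UNIV. la y) = 1" using la by (auto simp: distr_def)
  define pos where "pos x = max (la x - ka x) 0" for x
  define neg where "neg x = max (ka x - la x) 0" for x
  define D where "D = (\<Sum>x\<in>UNIV. pos x)"
  have posle: "pos x \<le> la x" for x using kann[of x] lann[of x] by (simp add: pos_def)
  have posnn: "0 \<le> pos x" for x by (simp add: pos_def)
  have negnn: "0 \<le> neg x" for x by (simp add: neg_def)
  have pn: "pos x - neg x = la x - ka x" for x by (simp add: pos_def neg_def)
  have DN: "D = (\<Sum>x\<in>UNIV. neg x)"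
  proof -
    have "(\<Sum>x\<in>UNIV. pos x) - (\<Sum>x\<in>UNIV. neg x) = (\<Sum>x\<in>UNIV. la x) - (\<Sum>x\<in>UNIV. ka x)"
      by (simp add: sum_subtractf[symmetric] pn)
    then show ?thesis using kas las D_def by simp
  qed
  have omle: "om (x,y) \<le> la x" for x y
  proof -
    have "om (x,y) \<le> (\<Sum>y\<in>UNIV. om (x, y))"
      by (rule member_le_sum) (auto simp: omnn)
    then show ?thesis using row by simp
  qed
  define r where "r z = (if la (fst z) = 0 then 0 else om z * pos (fst z) / la (fst z))" for z
  have rnn: "0 \<le> r z" for z using omnn[of z] posnn lann by (simp add: r_def)
  have rle: "r z \<le> om z" for z
  proof (cases "la (fst z) = 0")
    case False
    then have "la (fst z) > 0" using lann[of "fst z"] by simp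
    then have "om z * pos (fst z) / la (fst z) \<le> om z * la (fst z) / la (fst z)"
      by (intro divide_right_mono mult_left_mono posle omnn) auto
    then show ?thesis using False by (simp add: r_def)
  qed (simp add: r_def omnn)
  have rle2: "r (x,y) \<le> pos x" for x y
  proof (cases "la x = 0")
    case False
    then have "la x > 0" using lann[of x] by simp
    then have "om (x,y) * pos x / la x \<le> la x * pos x / la x"
      by (intro divide_right_mono mult_right_mono posnn omle) auto
    then show ?thesis using False by (simp add: r_def)
  qed (simp add: r_def posnn)
  have rrow: "(\<Sum>y\<in>UNIV. r (x,y)) = pos x" for x
  proof (cases "la x = 0")
    case True
    then show ?thesis using posle[of x] posnn[of x] by (simp add: r_def)
  next
    case False
    have "(\<Sum>y\<in>UNIV. r (x,y)) = (\<Sum>y\<in>UNIV. om (x,y)) * pos x / la x"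
      using False by (simp add: r_def sum_distrib_right sum_divide_distrib)
    then show ?thesis using False row by simp
  qed
  define c where "c y = (\<Sum>x\<in>UNIV. r (x,y))" for y
  have cnn: "0 \<le> c y" for y unfolding c_def by (intro sum_nonneg) (simp add: rnn)
  have csum: "(\<Sum>y\<in>UNIV. c y) = D"
    unfolding c_def D_def using rrow by (subst sum.swap) simp
  have cle: "c y \<le> D" for y
  proof -
    have "c y \<le> (\<Sum>y\<in>UNIV. c y)" by (rule member_le_sum) (auto simp: cnn)
    then show ?thesis using csum by simp
  qed
  define a where "a z = (if D = 0 then 0 else neg (fst z) * c (snd z) / D)" for z
  have Dnn: "0 \<le> D" unfolding D_def by (intro sum_nonneg) (simp add: posnn)
  have ann: "0 \<le> a z" for z using negnn cnn Dnn by (simp add: a_def)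
  have ale: "a (x,y) \<le> neg x" for x y
  proof (cases "D = 0")
    case False
    then have "D > 0" using Dnn by simp
    then have "neg x * c y / D \<le> neg x * D / D"
      by (intro divide_right_mono mult_left_mono negnn cle) auto
    then show ?thesis using False by (simp add: a_def)
  qed (simp add: a_def negnn)
  have arow: "(\<Sum>y\<in>UNIV. a (x,y)) = neg x" for x
  proof (cases "D = 0")
    case True
    then have "\<forall>x\<in>UNIV. neg x = 0" using DN negnn by (simp add: sum_nonneg_eq_0_iff)
    then show ?thesis using True by (simp add: a_def)
  next
    case False
    have "(\<Sum>y\<in>UNIV. a (x,y)) = neg x * (\<Sum>y\<in>UNIV. c y) / D"
      using False by (simp add: a_def sum_distrib_left sum_divide_distrib)
    then show ?thesis using False csum by simp
  qed
  have acol: "(\<Sum>x\<in>UNIV. a (x,y)) = c y" for y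
  proof (cases "D = 0")
    case True
    then have "c y = 0" using cle[of y] cnn[of y] by simp
    then show ?thesis using True by (simp add: a_def)
  next
    case False
    have "(\<Sum>x\<in>UNIV. a (x,y)) = (\<Sum>x\<in>UNIV. neg x) * c y / D"
      using False by (simp add: a_def sum_distrib_right sum_divide_distrib)
    then show ?thesis using False DN by simp
  qed
  define p where "p z = om z - r z + a z" for z
  have prow: "(\<Sum>y\<in>UNIV. p (x,y)) = ka x" for x
    using row[of x] rrow[of x] arow[of x] pn[of x]
    by (simp add: p_def sum.distrib sum_subtractf)
  have pcol: "(\<Sum>x\<in>UNIV. p (x,y)) = mu y" for y
    using col[of y] acol[of y]
    by (simp add: p_def sum.distrib sum_subtractf c_def)
  have psum: "(\<Sum>z\<in>UNIV. p z) = 1"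
  proof -
    have "(\<Sum>z\<in>UNIV. p z) = (\<Sum>x\<in>UNIV. \<Sum>y\<in>UNIV. p (x,y))"
      by (simp add: sum.cartesian_product UNIV_Times_UNIV[symmetric] del: UNIV_Times_UNIV)
    then show ?thesis using prow kas by simp
  qed
  have pnn: "0 \<le> p z" for z using rle[of z] ann[of z] by (simp add: p_def)
  have "p \<in> couplings ka mu"
    using prow pcol psum pnn by (simp add: couplings_def distr_def)
  moreover have "\<bar>om (x,y) - p (x,y)\<bar> \<le> \<bar>ka x - la x\<bar>" for x y
  proof -
    have "\<bar>om (x,y) - p (x,y)\<bar> = \<bar>r (x,y) - a (x,y)\<bar>" by (simp add: p_def)
    moreover have "pos x \<le> \<bar>ka x - la x\<bar>" "neg x \<le> \<bar>ka x - la x\<bar>"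
      by (auto simp: pos_def neg_def)
    ultimately show ?thesis using rnn[of "(x,y)"] ann[of "(x,y)"] rle2[of x y] ale[of x y]
      by linarith
  qed
  ultimately show ?thesis by blast
qed

lemma dTV_bound:
  fixes f :: "'b::finite \<Rightarrow> real" and g h :: "'a::finite \<Rightarrow> real"
  assumes "\<And>z. \<bar>f z\<bar> \<le> \<bar>g (k z) - h (k z)\<bar>"
  shows "Max (range (\<lambda>z. \<bar>f z\<bar>)) \<le> dTV g h"
proof -
  have "\<bar>f z\<bar> \<le> dTV g h" for z
  proof -
    have "\<bar>g (k z) - h (k z)\<bar> \<le> dTV g h" unfolding dTV_def by (rule Max_ge) auto
    then show ?thesis using assms[of z] by linarith
  qed
  then show ?thesis by (subst Max_le_iff) auto
qed

theorem lemma2: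
  fixes ka la mu nu :: "'a::finite \<Rightarrow> real" and om :: "'a \<times> 'a \<Rightarrow> real"
  assumes "distr ka" "distr la" "distr mu" "distr nu"
    and "om \<in> couplings la mu"
  shows "\<exists>p \<in> couplings ka mu. \<exists>rho \<in> couplings la nu.
           dTV om p \<le> dTV ka la \<and> dTV om rho \<le> dTV mu nu"
proof -
  obtain p where p: "p \<in> couplings ka mu" and pb: "\<forall>x y. \<bar>om (x,y) - p (x,y)\<bar> \<le> \<bar>ka x - la x\<bar>"
    using one_side[OF assms(1,2,5)] by blast
  define om' where "om' z = om (snd z, fst z)" for z
  have swsum: "(\<Sum>z\<in>UNIV. f (snd z, fst z)) = (\<Sum>z\<in>UNIV. f z)" for f :: "'a \<times> 'a \<Rightarrow> real"
    by (rule sum.reindex_bij_witness[where i="\<lambda>z. (snd z, fst z)" and j="\<lambda>z. (snd z, fst z)"]) auto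
  have "om' \<in> couplings mu la"
    using assms(5) swsum[of om] by (simp add: couplings_def distr_def om'_def)
  then obtain q where q: "q \<in> couplings nu la" and qb: "\<forall>x y. \<bar>om' (x,y) - q (x,y)\<bar> \<le> \<bar>nu x - mu x\<bar>"
    using one_side[OF assms(4,3)] by blast
  define rho where "rho z = q (snd z, fst z)" for z
  have rho: "rho \<in> couplings la nu"
    using q swsum[of q] by (simp add: couplings_def distr_def rho_def)
  have "dTV om p \<le> dTV ka la"
    unfolding dTV_def[of om p]
    by (rule dTV_bound[where k=fst]) (use pb in \<open>auto simp: abs_minus_commute\<close>)
  moreover have "dTV om rho \<le> dTV mu nu"
    unfolding dTV_def[of om rho]
    by (rule dTV_bound[where k=snd]) (use qb in \<open>auto simp: abs_minus_commute om'_def rho_def\<close>)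
  ultimately show ?thesis using p rho by blast
qed

end
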